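(* Let $(V,\langle\cdot\,,\cdot\rangle_V)$ be an admissible integral $\mathrm{Cl}_{r,s}$-module and $(U,(\cdot\,,\cdot)_U)$ an admissible integral $\mathrm{Cl}_{8,0}$-module with positive definite inner product $(\cdot\,,\cdot)_U$, such that the representations $J_{y_j}\in\mathrm{End}(U)$ permute the integral basis of $U$ up to sign for all orthonormal generators $y_1,\ldots,y_8$ of $\mathrm{Cl}_{8,0}$. Then $V\otimes U$ with the scalar product $\langle v\otimes u,v'\otimes u'\rangle=\langle v,v'\rangle_V(u,u')_U$ is (carries the structure of) an admissible integral $\mathrm{Cl}_{r+8,s}$-module.
   Context: A scalar product is a real symmetric non-degenerate bilinear form. $\mathrm{Cl}_{p,q}$ is the real Clifford algebra generated by $\mathbb R^{p,q}$ ($\mathbb R^{p+q}$ with quadratic form $x_1^2+\dots+x_p^2-x_{p+1}^2-\dots-x_{p+q}^2$) with relation $z^2=-\langle z,z\rangle\cdot1$; orthonormal generators $z_k$ satisfy $\langle z_k,z_l\rangle=0$ ($k\ne l$), $\langle z_k,z_k\rangle=\pm1$. A $\mathrm{Cl}_{p,q}$-module $V$ with representation $J$ is admissible if it carries a scalar product with $\langle J_zu,v\rangle_V=-\langle u,J_zv\rangle_V$ for all $z,u,v$; it is an admissible integral module if it has an integral basis, i.e. a basis $\{v_\alpha\}$ with $\langle v_\alpha,v_\beta\rangle_V=0$ ($\alpha\ne\beta$), $\langle v_\alpha,v_\alpha\rangle_V=\pm1$, and $\langle J_{z_k}v_\alpha,v_\beta\rangle_V\in\{1,-1,0\}$ for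 all orthonormal generators $z_k$ and all $\alpha,\beta$. An operator permutes a basis up to sign if it sends each basis vector to $\pm$ some basis vector. *)

theory Defs
  imports "HOL-Analysis.Analysis"
begin

text \<open>Finite-dimensional real vector spaces are modelled as coordinate spaces real^'n.
  Orthonormal generators z_0,...,z_(p+q-1) of R^{p,q} are the standard basis vectors;
  z_k with k < p has square norm +1, the others -1. A vector z of R^{p,q} is
  a function nat => real whose entries with index k < p+q are its coordinates.\<close>

definition sp :: "real^'n^'n \<Rightarrow> real^'n \<Rightarrow> real^'n \<Rightarrow> real" where
  "sp G u v = u \<bullet> (G *v v)"

definition scalar_product :: "real^'n^'n \<Rightarrow> bool" where
  "scalar_product G \<longleftrightarrow> transpose G = G \<and> invertible G"

definition qf :: "nat \<Rightarrow> nat \<Rightarrow> (nat \<Rightarrow> real) \<Rightarrow> real" where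
  "qf p q z = (\<Sum>k<p. (z k)^2) - (\<Sum>k\<in>{p..<p+q}. (z k)^2)"

definition Jz :: "nat \<Rightarrow> nat \<Rightarrow> (nat \<Rightarrow> real^'n^'n) \<Rightarrow> (nat \<Rightarrow> real) \<Rightarrow> real^'n^'n" where
  "Jz p q J z = (\<Sum>k<p+q. z k *\<^sub>R J k)"

text \<open>A representation of Cl_{p,q}: linear map z \<mapsto> J_z with J_z^2 = -<z,z> Id
  (universal property of the Clifford algebra); J k is the image of the generator z_k.\<close>
definition clifford_rep :: "nat \<Rightarrow> nat \<Rightarrow> (nat \<Rightarrow> real^'n^'n) \<Rightarrow> bool" where
  "clifford_rep p q J \<longleftrightarrow>
     (\<forall>z. Jz p q J z ** Jz p q J z = (- qf p q z) *\<^sub>R mat 1)"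

definition admissible :: "nat \<Rightarrow> nat \<Rightarrow> real^'n^'n \<Rightarrow> (nat \<Rightarrow> real^'n^'n) \<Rightarrow> bool" where
  "admissible p q G J \<longleftrightarrow> clifford_rep p q J \<and> scalar_product G \<and>
     (\<forall>z u v. sp G (Jz p q J z *v u) v = - sp G u (Jz p q J z *v v))"

definition is_basis :: "('n \<Rightarrow> real^'n) \<Rightarrow> bool" where
  "is_basis b \<longleftrightarrow> inj b \<and> independent (range b) \<and> span (range b) = UNIV"

definition integral_basis ::
  "nat \<Rightarrow> nat \<Rightarrow> real^'n^'n \<Rightarrow> (nat \<Rightarrow> real^'n^'n) \<Rightarrow> ('n \<Rightarrow> real^'n) \<Rightarrow> bool" where
  "integral_basis p q G J b \<longleftrightarrow> is_basis b \<and>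
     (\<forall>\<alpha> \<beta>. \<alpha> \<noteq> \<beta> \<longrightarrow> sp G (b \<alpha>) (b \<beta>) = 0) \<and>
     (\<forall>\<alpha>. sp G (b \<alpha>) (b \<alpha>) \<in> {1, -1}) \<and>
     (\<forall>k<p+q. \<forall>\<alpha> \<beta>. sp G (J k *v b \<alpha>) (b \<beta>) \<in> {1, -1, 0})"

definition admissible_integral ::
  "nat \<Rightarrow> nat \<Rightarrow> real^'n^'n \<Rightarrow> (nat \<Rightarrow> real^'n^'n) \<Rightarrow> bool" where
  "admissible_integral p q G J \<longleftrightarrow> admissible p q G J \<and> (\<exists>b. integral_basis p q G J b)"

definition permutes_basis_up_to_sign :: "real^'n^'n \<Rightarrow> ('n \<Rightarrow> real^'n) \<Rightarrow> bool" where
  "permutes_basis_up_to_sign A b \<longleftrightarrow>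
     (\<forall>\<alpha>. \<exists>\<beta>. A *v b \<alpha> = b \<beta> \<or> A *v b \<alpha> = - b \<beta>)"

definition tensor :: "real^'n \<Rightarrow> real^'m \<Rightarrow> real^('n \<times> 'm)" where
  "tensor v u = (\<chi> ij. v $ fst ij * u $ snd ij)"

end

theory Submission
  imports Defs
begin


definition kron :: "real^'n^'n \<Rightarrow> real^'m^'m \<Rightarrow> real^('n\<times>'m)^('n\<times>'m)" where
  "kron A B = (\<chi> ij kl. A $ fst ij $ fst kl * B $ snd ij $ snd kl)"

lemma kron_nth: "kron A B $ (i,j) $ (k,l) = A $ i $ k * B $ j $ l"
  by (simp add: kron_def)

lemma sum_pair: "(\<Sum>x\<in>UNIV. f x) = (\<Sum>a\<in>UNIV. \<Sum>c\<in>UNIV. f (a, c))"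
  by (simp add: UNIV_Times_UNIV[symmetric] sum.cartesian_product del: UNIV_Times_UNIV)

lemma kron_mul: "kron A B ** kron C D = kron (A ** C) (B ** D)"
proof -
  have "(kron A B ** kron C D) $ (i,j) $ (k,l) = kron (A ** C) (B ** D) $ (i,j) $ (k,l)" for i j k l
  proof -
    have "(kron A B ** kron C D) $ (i,j) $ (k,l) = (\<Sum>x\<in>UNIV. kron A B $ (i,j) $ x * kron C D $ x $ (k,l))"
      by (simp add: matrix_matrix_mult_def)
    also have "\<dots> = (\<Sum>a\<in>UNIV. \<Sum>c\<in>UNIV. (A$i$a * C$a$k) * (B$j$c * D$c$l))"
      by (subst sum_pair) (simp add: kron_nth mult_ac)
    also have "\<dots> = (\<Sum>a\<in>UNIV. A$i$a * C$a$k) * (\<Sum>c\<in>UNIV. B$j$c * D$c$l)"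
      by (simp add: sum_product)
    also have "\<dots> = kron (A ** C) (B ** D) $ (i,j) $ (k,l)"
      by (simp add: kron_nth matrix_matrix_mult_def)
    finally show ?thesis .
  qed
  then show ?thesis by (simp add: vec_eq_iff)
qed


lemma tensor_nth: "tensor v u $ (i,j) = v $ i * u $ j"
  by (simp add: tensor_def)

lemma kron_tensor: "kron A B *v tensor v u = tensor (A *v v) (B *v u)"
proof -
  have "(kron A B *v tensor v u) $ (i,j) = tensor (A *v v) (B *v u) $ (i,j)" for i j
  proof -
    have "(kron A B *v tensor v u) $ (i,j) = (\<Sum>x\<in>UNIV. kron A B $ (i,j) $ x * tensor v u $ x)"
      by (simp add: matrix_vector_mult_def)
    also have "\<dots> = (\<Sum>a\<in>UNIV. \<Sum>c\<in>UNIV. (A$i$a * v$a) * (B$j$c * u$c))"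
      by (subst sum_pair) (simp add: kron_nth tensor_nth mult_ac)
    also have "\<dots> = (\<Sum>a\<in>UNIV. A$i$a * v$a) * (\<Sum>c\<in>UNIV. B$j$c * u$c)"
      by (simp add: sum_product)
    also have "\<dots> = tensor (A *v v) (B *v u) $ (i,j)"
      by (simp add: tensor_nth matrix_vector_mult_def)
    finally show ?thesis .
  qed
  then show ?thesis by (simp add: vec_eq_iff)
qed

lemma tensor_inner: "tensor v u \<bullet> tensor v' u' = (v \<bullet> v') * (u \<bullet> u')"
proof -
  have "tensor v u \<bullet> tensor v' u' = (\<Sum>x\<in>UNIV. tensor v u $ x * tensor v' u' $ x)"
    by (simp add: inner_vec_def)
  also have "\<dots> = (\<Sum>a\<in>UNIV. \<Sum>c\<in>UNIV. (v$a * v'$a) * (u$c * u'$c))"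
    by (subst sum_pair) (simp add: tensor_nth mult_ac)
  also have "\<dots> = (v \<bullet> v') * (u \<bullet> u')"
    by (simp add: sum_product inner_vec_def)
  finally show ?thesis .
qed

lemma sp_kron: "sp (kron G H) (tensor v u) (tensor v' u') = sp G v v' * sp H u u'"
  by (simp add: sp_def kron_tensor tensor_inner)

lemma kron_eqI: "(\<And>i j k l. X $ (i,j) $ (k,l) = Y $ (i,j) $ (k,l)) \<Longrightarrow> X = Y"
  by (simp add: vec_eq_iff)

lemma kron_transpose: "transpose (kron A B) = kron (transpose A) (transpose B)"
  by (rule kron_eqI) (simp add: kron_nth transpose_def)

lemma kron_mat1: "kron (mat 1) (mat 1) = mat 1"
  by (rule kron_eqI) (simp add: kron_nth mat_def)

lemma kron_add_left: "kron (A + B) C = kron A C + kron B C"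
  by (rule kron_eqI) (simp add: kron_nth algebra_simps)
lemma kron_add_right: "kron A (B + C) = kron A B + kron A C"
  by (rule kron_eqI) (simp add: kron_nth algebra_simps)
lemma kron_scaleR_left: "kron (c *\<^sub>R A) B = c *\<^sub>R kron A B"
  by (rule kron_eqI) (simp add: kron_nth algebra_simps)
lemma kron_scaleR_right: "kron A (c *\<^sub>R B) = c *\<^sub>R kron A B"
  by (rule kron_eqI) (simp add: kron_nth algebra_simps)
lemma kron_uminus_left: "kron (- A) B = - kron A B"
  by (rule kron_eqI) (simp add: kron_nth)
lemma kron_uminus_right: "kron A (- B) = - kron A B"
  by (rule kron_eqI) (simp add: kron_nth)
lemma kron_zero_right: "kron A 0 = 0"
  by (rule kron_eqI) (simp add: kron_nth)


lemma matrix_add_rdistrib': "((A::real^'n^'m) + B) ** C = A ** C + B ** C"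
  by (vector matrix_matrix_mult_def sum.distrib[symmetric] field_simps)

lemma sum_mmul_left: "finite S \<Longrightarrow> (\<Sum>i\<in>S. f i) ** (B::real^'n^'n) = (\<Sum>i\<in>S. f i ** B)"
  by (induction S rule: finite_induct) (auto simp: matrix_add_rdistrib')
lemma sum_mmul_right: "finite S \<Longrightarrow> (B::real^'n^'n) ** (\<Sum>i\<in>S. f i) = (\<Sum>i\<in>S. B ** f i)"
  by (induction S rule: finite_induct) (auto simp: matrix_add_ldistrib)
lemma transpose_sum: "finite S \<Longrightarrow> transpose (\<Sum>i\<in>S. f i) = (\<Sum>i\<in>S. transpose (f i :: real^'n^'n))"
  by (induction S rule: finite_induct) (auto simp: transpose_def vec_eq_iff)

lemma mvm_neg: "(- (A::real^'n^'m)) *v x = - (A *v x)"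
  by (simp add: matrix_vector_mult_def vec_eq_iff sum_negf)

lemma sp_left: "sp G (A *v u) v = u \<bullet> ((transpose A ** G) *v v)"
proof -
  have "sp G (A *v u) v = (G *v v) \<bullet> (A *v u)" by (simp add: sp_def inner_commute)
  also have "\<dots> = ((G *v v) v* A) \<bullet> u" by (simp add: dot_lmul_matrix)
  also have "\<dots> = u \<bullet> (transpose A *v (G *v v))" by (simp add: inner_commute)
  finally show ?thesis by (simp add: matrix_vector_mul_assoc)
qed

lemma sp_right: "sp G u (A *v v) = u \<bullet> ((G ** A) *v v)"
  by (simp add: sp_def matrix_vector_mul_assoc)

lemma skew_iff: "(\<forall>u v. sp G (A *v u) v = - sp G u (A *v v)) \<longleftrightarrow> transpose A ** G = - (G ** A)"
proof
  assume h: "\<forall>u v. sp G (A *v u) v = - sp G u (A *v v)"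
  have "\<forall>v. (transpose A ** G) *v v = (- (G ** A)) *v v"
  proof
    fix v
    let ?a = "(transpose A ** G) *v v" and ?b = "(G ** A) *v v"
    have e: "(?a + ?b) \<bullet> ?a = - ((?a + ?b) \<bullet> ?b)"
      using h[rule_format, of "?a + ?b" v] unfolding sp_left sp_right .
    have "(?a + ?b) \<bullet> (?a + ?b) = 0" using e by (simp add: inner_add_right)
    then have "?a + ?b = 0" by simp
    then show "(transpose A ** G) *v v = (- (G ** A)) *v v" by (simp add: mvm_neg eq_neg_iff_add_eq_0)
  qed
  then show "transpose A ** G = - (G ** A)" by (simp add: matrix_eq)
next
  assume "transpose A ** G = - (G ** A)"
  then show "\<forall>u v. sp G (A *v u) v = - sp G u (A *v v)"
    unfolding sp_left sp_right by (simp add: mvm_neg)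
qed

definition eps :: "nat \<Rightarrow> nat \<Rightarrow> real" where "eps p k = (if k < p then 1 else -1)"
definition gg :: "nat \<Rightarrow> nat \<Rightarrow> nat \<Rightarrow> real" where "gg p k l = (if k = l then eps p k else 0)"

lemma qf_eq: "qf p q z = (\<Sum>k<p+q. eps p k * (z k)^2)"
proof -
  have u: "{..<p+q} = {..<p} \<union> {p..<p+q}" by auto
  have "(\<Sum>k<p+q. eps p k * (z k)^2) = (\<Sum>k<p. eps p k * (z k)^2) + (\<Sum>k\<in>{p..<p+q}. eps p k * (z k)^2)"
    unfolding u by (rule sum.union_disjoint) auto
  also have "\<dots> = (\<Sum>k<p. (z k)^2) - (\<Sum>k\<in>{p..<p+q}. (z k)^2)"
    by (simp add: eps_def sum_negf)
  finally show ?thesis by (simp add: qf_def)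
qed

lemma Jz_delta: "k < p + q \<Longrightarrow> Jz p q J (\<lambda>i. if i = k then 1 else 0) = J k"
proof -
  assume k: "k < p + q"
  have "(\<lambda>i. (if i = k then 1 else 0) *\<^sub>R J i) = (\<lambda>i. if i = k then J i else 0)" by auto
  note eq = this
  show ?thesis unfolding Jz_def eq using k by simp
qed

lemma qf_delta: "k < p + q \<Longrightarrow> qf p q (\<lambda>i. if i = k then 1 else 0) = eps p k"
proof -
  assume k: "k < p + q"
  have "(\<lambda>i. eps p i * (if i = k then 1 else 0)^2) = (\<lambda>i. if i = k then eps p i else 0)" by auto
  note eq = this
  show ?thesis unfolding qf_eq eq using k by simp
qed

lemma Jz_delta2: "k < p + q \<Longrightarrow> l < p + q \<Longrightarrow> k \<noteq> l \<Longrightarrow>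
   Jz p q J (\<lambda>i. (if i = k then 1 else 0) + (if i = l then 1 else 0)) = J k + J l"
proof -
  assume k: "k < p + q" and l: "l < p + q" and kl: "k \<noteq> l"
  have "(\<lambda>i. ((if i = k then 1 else 0) + (if i = l then 1 else 0)) *\<^sub>R J i) =
      (\<lambda>i. (if i = k then J i else 0) + (if i = l then J i else 0))" using kl by auto
  note eq = this
  show ?thesis unfolding Jz_def eq using k l by (simp add: sum.distrib)
qed

lemma qf_delta2: "k < p + q \<Longrightarrow> l < p + q \<Longrightarrow> k \<noteq> l \<Longrightarrow>
   qf p q (\<lambda>i. (if i = k then 1 else 0) + (if i = l then 1 else 0)) = eps p k + eps p l"
proof -
  assume k: "k < p + q" and l: "l < p + q" and kl: "k \<noteq> l"
  have "(\<lambda>i. eps p i * ((if i = k then 1 else 0) + (if i = l then 1 else 0))^2) =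
      (\<lambda>i. (if i = k then eps p i else 0) + (if i = l then eps p i else 0))" using kl by auto
  note eq = this
  show ?thesis unfolding qf_eq eq using k l by (simp add: sum.distrib)
qed

lemma rep_rel: "clifford_rep p q (J :: nat \<Rightarrow> real^'n^'n) \<longleftrightarrow>
   (\<forall>k<p+q. \<forall>l<p+q. J k ** J l + J l ** J k = (-2 * gg p k l) *\<^sub>R mat 1)"
proof
  assume h: "clifford_rep p q J"
  have sq: "J k ** J k = (- eps p k) *\<^sub>R mat 1" if "k < p+q" for k
  proof -
    have "Jz p q J (\<lambda>i. if i = k then 1 else 0) ** Jz p q J (\<lambda>i. if i = k then 1 else 0) =
       (- qf p q (\<lambda>i. if i = k then 1 else 0)) *\<^sub>R mat 1" using h unfolding clifford_rep_def by blast
    then show ?thesis by (simp only: Jz_delta[OF that] qf_delta[OF that])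
  qed
  show "\<forall>k<p+q. \<forall>l<p+q. J k ** J l + J l ** J k = (-2 * gg p k l) *\<^sub>R mat 1"
  proof (intro allI impI)
    fix k l assume k: "k < p+q" and l: "l < p+q"
    show "J k ** J l + J l ** J k = (-2 * gg p k l) *\<^sub>R mat 1"
    proof (cases "k = l")
      case True
      have "J k ** J k + J k ** J k = 2 *\<^sub>R (J k ** J k)" by (simp add: scaleR_2)
      also have "\<dots> = (-2 * eps p k) *\<^sub>R mat 1" using sq[OF k] by simp
      finally show ?thesis using True by (simp add: gg_def)
    next
      case False
      have "(J k + J l) ** (J k + J l) = (- (eps p k + eps p l)) *\<^sub>R mat 1"
      proof -
        let ?d = "(\<lambda>i. (if i = k then 1 else 0) + (if i = l then 1 else 0))"
        have "Jz p q J ?d ** Jz p q J ?d = (- qf p q ?d) *\<^sub>R mat 1" using h unfolding clifford_rep_def by blast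
        then show ?thesis by (simp only: Jz_delta2[OF k l False] qf_delta2[OF k l False])
      qed
      moreover have "(J k + J l) ** (J k + J l) = (J k ** J k + J l ** J l) + (J k ** J l + J l ** J k)"
        by (simp only: matrix_add_ldistrib matrix_add_rdistrib' add_ac)
      moreover have "J k ** J k + J l ** J l = (- (eps p k + eps p l)) *\<^sub>R mat 1"
        using sq[OF k] sq[OF l] by (simp add: algebra_simps)
      ultimately have "J k ** J l + J l ** J k = 0" by simp
      then show ?thesis using False by (simp add: gg_def)
    qed
  qed
next
  assume h: "\<forall>k<p+q. \<forall>l<p+q. J k ** J l + J l ** J k = (-2 * gg p k l) *\<^sub>R mat 1"
  show "clifford_rep p q J" unfolding clifford_rep_def
  proof
    fix z
    let ?N = "{..<p+q}"
    define S where "S = (\<Sum>k\<in>?N. \<Sum>l\<in>?N. (z k * z l) *\<^sub>R (J k ** J l))"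
    have S1: "Jz p q J z ** Jz p q J z = (\<Sum>k\<in>?N. \<Sum>l\<in>?N. (z k * z l) *\<^sub>R (J l ** J k))"
      unfolding Jz_def
      by (simp add: sum_mmul_left sum_mmul_right matrix_scalar_ac scalar_matrix_assoc[symmetric] scaleR_sum_right)
    have S2: "S = (\<Sum>k\<in>?N. \<Sum>l\<in>?N. (z k * z l) *\<^sub>R (J l ** J k))"
      unfolding S_def by (subst sum.swap) (simp add: mult.commute)
    have "S + S = (\<Sum>k\<in>?N. \<Sum>l\<in>?N. (z k * z l) *\<^sub>R (J k ** J l + J l ** J k))"
      by (subst S2) (simp add: S_def sum.distrib[symmetric] scaleR_add_right)
    also have "\<dots> = (\<Sum>k\<in>?N. \<Sum>l\<in>?N. (z k * z l * (-2 * gg p k l)) *\<^sub>R mat 1)"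
      using h by (intro sum.cong refl) simp
    also have "\<dots> = (\<Sum>k\<in>?N. (-2 * (eps p k * (z k)^2)) *\<^sub>R mat 1)"
    proof (intro sum.cong refl)
      fix k assume "k \<in> ?N"
      have "(\<lambda>l. (z k * z l * (-2 * gg p k l)) *\<^sub>R (mat 1 :: real^'n^'n)) =
          (\<lambda>l. if k = l then (-2 * (eps p k * (z k)^2)) *\<^sub>R mat 1 else 0)"
        by (auto simp: gg_def power2_eq_square mult_ac)
      note eq = this
      show "(\<Sum>l\<in>?N. (z k * z l * (-2 * gg p k l)) *\<^sub>R (mat 1 :: real^'n^'n)) =
          (-2 * (eps p k * (z k)^2)) *\<^sub>R mat 1" unfolding eq using \<open>k \<in> ?N\<close> by simp
    qed
    also have "\<dots> = (-2 * qf p q z) *\<^sub>R mat 1"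
      by (simp add: qf_eq scaleR_sum_left sum_distrib_left)
    finally have "S + S = (-2 * qf p q z) *\<^sub>R mat 1" .
    then have "(2::real) *\<^sub>R S = 2 *\<^sub>R ((- qf p q z) *\<^sub>R mat 1)" by (simp add: scaleR_2)
    then have "S = (- qf p q z) *\<^sub>R mat 1" by (simp only: scaleR_cancel_left) simp
    then show "Jz p q J z ** Jz p q J z = (- qf p q z) *\<^sub>R mat 1" using S1 S2 by simp
  qed
qed

lemma skew_Jz: "(\<forall>k<p+q. transpose (J k) ** G = - (G ** J k)) \<Longrightarrow>
   transpose (Jz p q J z) ** G = - (G ** Jz p q (J :: nat \<Rightarrow> real^'n^'n) z)"
proof -
  assume h: "\<forall>k<p+q. transpose (J k) ** G = - (G ** J k)"
  have "transpose (Jz p q J z) ** G = (\<Sum>k<p+q. z k *\<^sub>R (transpose (J k) ** G))"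
    unfolding Jz_def by (simp add: transpose_sum transpose_scalar sum_mmul_left scalar_matrix_assoc)
  also have "\<dots> = (\<Sum>k<p+q. - (z k *\<^sub>R (G ** J k)))"
    using h by (intro sum.cong refl) simp
  also have "\<dots> = - (G ** Jz p q J z)"
    unfolding Jz_def by (simp add: sum_negf sum_mmul_right matrix_scalar_ac scalar_matrix_assoc[symmetric])
  finally show ?thesis .
qed



lemma mmul_neg_right: "(A::real^'n^'m) ** (- B) = - (A ** B)"
  by (simp add: matrix_matrix_mult_def vec_eq_iff sum_negf)
lemma mmul_neg_left: "(- A::real^'n^'m) ** B = - (A ** B)"
  by (simp add: matrix_matrix_mult_def vec_eq_iff sum_negf)

primrec Qp :: "(nat \<Rightarrow> real^'m^'m) \<Rightarrow> nat \<Rightarrow> real^'m^'m" where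
  "Qp K 0 = mat 1" | "Qp K (Suc n) = Qp K n ** K n"

lemma Q_comm:
  assumes KA: "\<forall>i<8. \<forall>j<8. i \<noteq> j \<longrightarrow> K i ** K j = - (K j ** K i)"
    and j: "j < 8"
  shows "n \<le> 8 \<Longrightarrow> K j ** Qp K n = (if j < n then (-1)^(n-1) else (-1)^n) *\<^sub>R (Qp K n ** K j)"
proof (induction n)
  case 0 show ?case by simp
next
  case (Suc n)
  then have IH: "K j ** Qp K n = (if j < n then (-1)^(n-1) else (-1)^n) *\<^sub>R (Qp K n ** K j)" by simp
  have "K j ** Qp K (Suc n) = (K j ** Qp K n) ** K n" by (simp add: matrix_mul_assoc)
  also have "\<dots> = (if j < n then (-1)^(n-1) else (-1)^n) *\<^sub>R ((Qp K n ** K j) ** K n)"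
    unfolding IH by (simp add: scalar_matrix_assoc)
  finally have c: "K j ** Qp K (Suc n) = (if j < n then (-1)^(n-1) else (-1)^n) *\<^sub>R ((Qp K n ** K j) ** K n)" .
  show ?case
  proof (cases "j = n")
    case True then show ?thesis using c by simp
  next
    case False
    have "(Qp K n ** K j) ** K n = Qp K n ** (K j ** K n)" by (simp add: matrix_mul_assoc)
    also have "\<dots> = - (Qp K (Suc n) ** K j)"
    proof -
      have "n < 8" using Suc.prems by simp
      then have ka: "K j ** K n = - (K n ** K j)" using KA j False by blast
      show ?thesis unfolding ka by (simp add: mmul_neg_right matrix_mul_assoc)
    qed
    finally have e: "(Qp K n ** K j) ** K n = - (Qp K (Suc n) ** K j)" .
    show ?thesis
    proof (cases "j < n")
      case True
      then obtain m where m: "n = Suc m" by (cases n) auto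
      show ?thesis using c e True m by simp
    next
      case False
      then show ?thesis using c e \<open>j \<noteq> n\<close> by simp
    qed
  qed
qed

lemma Q_sq:
  assumes KA: "\<forall>i<8. \<forall>j<8. i \<noteq> j \<longrightarrow> K i ** K j = - (K j ** K i)"
    and KK: "\<forall>i<8. K i ** K i = - mat 1"
    and n: "n < 8"
  shows "Qp K (Suc n) ** Qp K (Suc n) = (- ((-1)^n)) *\<^sub>R (Qp K n ** Qp K n)"
proof -
  have cm: "K n ** Qp K n = (-1)^n *\<^sub>R (Qp K n ** K n)"
    using Q_comm[OF KA, of n n] n by simp
  have "Qp K (Suc n) ** Qp K (Suc n) = Qp K n ** (K n ** Qp K n) ** K n"
    by (simp add: matrix_mul_assoc)
  also have "\<dots> = (-1)^n *\<^sub>R (Qp K n ** Qp K n ** (K n ** K n))"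
    unfolding cm by (simp add: matrix_scalar_ac scalar_matrix_assoc[symmetric] matrix_mul_assoc)
  also have "\<dots> = (- ((-1)^n)) *\<^sub>R (Qp K n ** Qp K n)"
    using KK n by (simp add: mmul_neg_right)
  finally show ?thesis .
qed

lemma Omega_sq:
  assumes KA: "\<forall>i<8. \<forall>j<8. i \<noteq> j \<longrightarrow> K i ** K j = - (K j ** K i)"
    and KK: "\<forall>i<8. K i ** K i = - mat 1"
  shows "Qp K 8 ** Qp K 8 = mat 1"
proof -
  have "n \<le> 8 \<Longrightarrow> Qp K n ** Qp K n = (\<Prod>i<n. - ((-1)^i :: real)) *\<^sub>R mat 1" for n
  proof (induction n)
    case 0 show ?case by simp
  next
    case (Suc n) then show ?case using Q_sq[OF KA KK, of n] by simp
  qed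
  from this[of 8] show ?thesis by (simp add: numeral_eq_Suc lessThan_Suc)
qed

lemma Q_iso:
  assumes KI: "\<forall>i<8. transpose (K i) ** H ** K i = H"
  shows "n \<le> 8 \<Longrightarrow> transpose (Qp K n) ** H ** Qp K n = H"
proof (induction n)
  case 0 show ?case by simp
next
  case (Suc n)
  have "transpose (Qp K (Suc n)) ** H ** Qp K (Suc n) =
        transpose (K n) ** (transpose (Qp K n) ** H ** Qp K n) ** K n"
    by (simp add: matrix_transpose_mul matrix_mul_assoc)
  also have "\<dots> = H" using Suc KI by simp
  finally show ?case .
qed

lemma Q_perm:
  assumes P: "\<forall>j<8. permutes_basis_up_to_sign (K j) b"
  shows "n \<le> 8 \<Longrightarrow> \<forall>\<alpha>. \<exists>\<beta>. Qp K n *v b \<alpha> = b \<beta> \<or> Qp K n *v b \<alpha> = - b \<beta>"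
proof (induction n)
  case 0 show ?case by auto
next
  case (Suc n)
  show ?case
  proof
    fix \<alpha>
    obtain \<gamma> where g: "K n *v b \<alpha> = b \<gamma> \<or> K n *v b \<alpha> = - b \<gamma>"
      using P Suc.prems unfolding permutes_basis_up_to_sign_def by (meson Suc_le_lessD)
    obtain \<beta> where bb: "Qp K n *v b \<gamma> = b \<beta> \<or> Qp K n *v b \<gamma> = - b \<beta>"
      using Suc by (meson Suc_leD)
    have "Qp K (Suc n) *v b \<alpha> = Qp K n *v (K n *v b \<alpha>)" by (simp add: matrix_vector_mul_assoc)
    then show "\<exists>\<beta>. Qp K (Suc n) *v b \<alpha> = b \<beta> \<or> Qp K (Suc n) *v b \<alpha> = - b \<beta>"
      using g bb by (auto simp: vec.neg)
  qed
qed

lemma orth_basis: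
  fixes f :: "'k::finite \<Rightarrow> real^'k"
  assumes o: "\<forall>i j. i \<noteq> j \<longrightarrow> sp G (f i) (f j) = 0" and nz: "\<forall>i. sp G (f i) (f i) \<noteq> 0"
  shows "is_basis f"
proof -
  have inj: "inj f" by (rule injI) (metis o nz)
  have ind: "independent (range f)"
    unfolding eucl.independent_explicit
  proof (intro conjI allI impI ballI)
    show "finite (range f)" by simp
    fix c v assume s0: "(\<Sum>v\<in>range f. c v *\<^sub>R v) = 0" and v: "v \<in> range f"
    then obtain i where i: "v = f i" by auto
    have "(\<Sum>v\<in>range f. c v *\<^sub>R v) = (\<Sum>j\<in>UNIV. c (f j) *\<^sub>R f j)"
      by (simp add: sum.reindex inj)
    then have "0 = sp G (\<Sum>j\<in>UNIV. c (f j) *\<^sub>R f j) (f i)" using s0 by (simp add: sp_def)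
    also have "\<dots> = (\<Sum>j\<in>UNIV. c (f j) * sp G (f j) (f i))"
      by (simp add: sp_def inner_sum_left)
    also have "\<dots> = (\<Sum>j\<in>UNIV. if j = i then c (f i) * sp G (f i) (f i) else 0)"
      using o by (intro sum.cong refl) auto
    also have "\<dots> = c (f i) * sp G (f i) (f i)" by simp
    finally show "c v = 0" using nz i by simp
  qed
  have "card (range f) = dim (UNIV :: (real^'k) set)"
    by (simp add: card_image inj)
  then have "span (range f) = UNIV"
    using eucl.card_eq_dim[of "range f" UNIV] ind by auto
  then show ?thesis using inj ind by (simp add: is_basis_def)
qed



lemma kron_zero_left: "kron 0 A = 0"
  by (rule kron_eqI) (simp add: kron_nth)

lemma mem3_mult: "(x::real) \<in> {1,-1,0} \<Longrightarrow> y \<in> {1,-1,0} \<Longrightarrow> x * y \<in> {1,-1,0}"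
  by auto

theorem theorem7p2:
  fixes r s :: nat
    and G :: "real^'n^'n" and J :: "nat \<Rightarrow> real^'n^'n"
    and H :: "real^'m^'m" and K :: "nat \<Rightarrow> real^'m^'m" and b :: "'m \<Rightarrow> real^'m"
  assumes "admissible_integral r s G J"
    and "admissible 8 0 H K"
    and "\<forall>u. u \<noteq> 0 \<longrightarrow> sp H u u > 0"
    and "integral_basis 8 0 H K b"
    and "\<forall>j<8. permutes_basis_up_to_sign (K j) b"
  shows "\<exists>(G' :: real^('n \<times> 'm)^('n \<times> 'm)) J'.
           (\<forall>v v' u u'. sp G' (tensor v u) (tensor v' u') = sp G v v' * sp H u u') \<and>
           admissible_integral (r + 8) s G' J'"
proof -
  from assms(1) obtain e where adJ: "admissible r s G J" and ie: "integral_basis r s G J e"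
    unfolding admissible_integral_def by blast
  from adJ have repJ: "clifford_rep r s J" and spG: "scalar_product G"
    and skJ0: "\<forall>z u v. sp G (Jz r s J z *v u) v = - sp G u (Jz r s J z *v v)"
    unfolding admissible_def by auto
  from assms(2) have repK: "clifford_rep 8 0 K" and spH: "scalar_product H"
    and skK0: "\<forall>z u v. sp H (Jz 8 0 K z *v u) v = - sp H u (Jz 8 0 K z *v v)"
    unfolding admissible_def by auto
  have JR: "\<forall>k<r+s. \<forall>l<r+s. J k ** J l + J l ** J k = (-2 * gg r k l) *\<^sub>R mat 1"
    using repJ rep_rel by blast
  have KR: "\<forall>k<8+0. \<forall>l<8+0. K k ** K l + K l ** K k = (-2 * gg 8 k l) *\<^sub>R mat 1"
    using repK rep_rel by blast
  have JS: "\<forall>k<r+s. transpose (J k) ** G = - (G ** J k)"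
  proof (intro allI impI)
    fix k assume k: "k < r + s"
    have "\<forall>u v. sp G (J k *v u) v = - sp G u (J k *v v)"
      using spec[OF skJ0, of "\<lambda>i. if i = k then 1 else 0"] unfolding Jz_delta[OF k] .
    then show "transpose (J k) ** G = - (G ** J k)" using skew_iff by blast
  qed
  have KS: "\<forall>k<8. transpose (K k) ** H = - (H ** K k)"
  proof (intro allI impI)
    fix k :: nat assume k0: "k < 8"
    then have k: "k < 8 + 0" by simp
    have "\<forall>u v. sp H (K k *v u) v = - sp H u (K k *v v)"
      using spec[OF skK0, of "\<lambda>i. if i = k then 1 else 0"] unfolding Jz_delta[OF k] .
    then show "transpose (K k) ** H = - (H ** K k)" using skew_iff by blast
  qed
  have GT: "transpose G = G" and HT: "transpose H = H"
    using spG spH unfolding scalar_product_def by auto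
  have KK: "\<forall>i<8. K i ** K i = - mat 1"
  proof (intro allI impI)
    fix i :: nat assume i: "i < 8"
    have "K i ** K i + K i ** K i = (-2 * gg 8 i i) *\<^sub>R mat 1" using KR i by simp
    then have "(2::real) *\<^sub>R (K i ** K i) = 2 *\<^sub>R (- mat 1)" using i by (simp add: gg_def eps_def scaleR_2)
    then show "K i ** K i = - mat 1" by (simp only: scaleR_cancel_left) simp
  qed
  have KA: "\<forall>i<8. \<forall>j<8. i \<noteq> j \<longrightarrow> K i ** K j = - (K j ** K i)"
  proof (intro allI impI)
    fix i j :: nat assume i: "i < 8" and j: "j < 8" and ij: "i \<noteq> j"
    have "K i ** K j + K j ** K i = (-2 * gg 8 i j) *\<^sub>R mat 1" using KR i j by simp
    then have "K i ** K j + K j ** K i = 0" using ij by (simp add: gg_def)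
    then show "K i ** K j = - (K j ** K i)" by (simp add: eq_neg_iff_add_eq_0)
  qed
  have KI: "\<forall>i<8. transpose (K i) ** H ** K i = H"
  proof (intro allI impI)
    fix i :: nat assume i: "i < 8"
    have "transpose (K i) ** H ** K i = (- (H ** K i)) ** K i" using KS i by simp
    also have "\<dots> = - (H ** (K i ** K i))" by (simp add: mmul_neg_left matrix_mul_assoc)
    also have "\<dots> = H" using KK i by (simp add: mmul_neg_right)
    finally show "transpose (K i) ** H ** K i = H" .
  qed
  define \<Omega> where "\<Omega> = Qp K 8"
  have OO: "\<Omega> ** \<Omega> = mat 1" unfolding \<Omega>_def using Omega_sq[OF KA KK] .
  have OK: "\<forall>j<8. \<Omega> ** K j + K j ** \<Omega> = 0"
  proof (intro allI impI)
    fix j :: nat assume j: "j < 8"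
    have "K j ** \<Omega> = - (\<Omega> ** K j)" using Q_comm[OF KA j, of 8] j unfolding \<Omega>_def by simp
    then show "\<Omega> ** K j + K j ** \<Omega> = 0" by simp
  qed
  have OS: "transpose \<Omega> ** H = H ** \<Omega>"
  proof -
    have iso: "transpose \<Omega> ** H ** \<Omega> = H" unfolding \<Omega>_def using Q_iso[OF KI] by simp
    have "transpose \<Omega> ** H = transpose \<Omega> ** H ** (\<Omega> ** \<Omega>)" using OO by simp
    also have "\<dots> = (transpose \<Omega> ** H ** \<Omega>) ** \<Omega>" by (simp add: matrix_mul_assoc)
    finally show ?thesis using iso by simp
  qed
  have OP: "\<forall>\<alpha>. \<exists>\<beta>. \<Omega> *v b \<alpha> = b \<beta> \<or> \<Omega> *v b \<alpha> = - b \<beta>"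
    unfolding \<Omega>_def using Q_perm[OF assms(5)] by simp

  define G' where "G' = kron G H"
  define sg where "sg = (\<lambda>k::nat. if k < r then k else k - 8)"
  define J' where "J' = (\<lambda>k. if r \<le> k \<and> k < r + 8 then kron (mat 1) (K (k - r)) else kron (J (sg k)) \<Omega>)"
  have J'mid: "J' k = kron (mat 1) (K (k - r))" if "r \<le> k" "k < r + 8" for k
    using that by (simp add: J'_def)
  have J'out: "J' k = kron (J (sg k)) \<Omega>" if "\<not> (r \<le> k \<and> k < r + 8)" for k
    using that unfolding J'_def by auto
  have sg_lt: "sg k < r + s" if "\<not> (r \<le> k \<and> k < r + 8)" "k < r + 8 + s" for k
    using that by (auto simp: sg_def)

  have mixed: "kron (mat 1) (K c) ** kron (J a) \<Omega> + kron (J a) \<Omega> ** kron (mat 1) (K c) = 0"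
    if "c < 8" for a c
  proof -
    have "kron (mat 1) (K c) ** kron (J a) \<Omega> + kron (J a) \<Omega> ** kron (mat 1) (K c)
        = kron (J a) (\<Omega> ** K c + K c ** \<Omega>)"
      by (simp add: kron_mul kron_add_right add.commute)
    also have "\<dots> = 0" using OK that by (simp add: kron_zero_right)
    finally show ?thesis .
  qed

  have rel: "J' k ** J' l + J' l ** J' k = (-2 * gg (r+8) k l) *\<^sub>R mat 1"
    if k: "k < r + 8 + s" and l: "l < r + 8 + s" for k l
  proof (cases "r \<le> k \<and> k < r + 8")
    case km: True
    show ?thesis
    proof (cases "r \<le> l \<and> l < r + 8")
      case lm: True
      have "J' k ** J' l + J' l ** J' k = kron (mat 1) (K (k-r) ** K (l-r) + K (l-r) ** K (k-r))"
        using km lm by (simp add: J'mid kron_mul kron_add_right)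
      also have "\<dots> = kron (mat 1) ((-2 * gg 8 (k-r) (l-r)) *\<^sub>R mat 1)"
        using KR km lm by (simp add: less_diff_conv2)
      also have "\<dots> = (-2 * gg (r+8) k l) *\<^sub>R mat 1"
        using km lm by (auto simp: kron_scaleR_right kron_uminus_right kron_zero_right kron_mat1 gg_def eps_def)
      finally show ?thesis .
    next
      case lo: False
      have "J' k ** J' l + J' l ** J' k = 0"
      proof -
        have "k - r < 8" using km by auto
        then show ?thesis using km lo mixed[of "k - r" "sg l"] by (simp add: J'mid J'out)
      qed
      moreover have "k \<noteq> l" using km lo by auto
      ultimately show ?thesis by (simp add: gg_def)
    qed
  next
    case ko: False
    show ?thesis
    proof (cases "r \<le> l \<and> l < r + 8")
      case lm: True
      have "J' k ** J' l + J' l ** J' k = 0"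
      proof -
        have "l - r < 8" using lm by auto
        then show ?thesis using ko lm mixed[of "l - r" "sg k"] by (simp add: J'mid J'out add.commute)
      qed
      moreover have "k \<noteq> l" using ko lm by auto
      ultimately show ?thesis by (simp add: gg_def)
    next
      case lo: False
      have a: "sg k < r + s" and bb: "sg l < r + s" using sg_lt ko lo k l by auto
      have "J' k ** J' l + J' l ** J' k = kron (J (sg k) ** J (sg l) + J (sg l) ** J (sg k)) (mat 1)"
        using ko lo OO by (simp add: J'out kron_mul kron_add_left)
      also have "\<dots> = kron ((-2 * gg r (sg k) (sg l)) *\<^sub>R mat 1) (mat 1)"
        using JR a bb by simp
      also have "\<dots> = (-2 * gg (r+8) k l) *\<^sub>R mat 1"
        using ko lo by (auto simp: kron_scaleR_left kron_uminus_left kron_zero_left kron_mat1 gg_def eps_def sg_def)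
      finally show ?thesis .
    qed
  qed

  have skew': "transpose (J' k) ** G' = - (G' ** J' k)" if k: "k < r + 8 + s" for k
  proof (cases "r \<le> k \<and> k < r + 8")
    case True
    then have c: "k - r < 8" by auto
    show ?thesis using True KS c
      by (simp add: J'mid G'_def kron_transpose kron_mul GT kron_uminus_right)
  next
    case False
    have a: "sg k < r + s" using sg_lt False k by auto
    show ?thesis using False JS a OS
      by (simp add: J'out G'_def kron_transpose kron_mul kron_uminus_left)
  qed

  have spG': "scalar_product G'"
  proof -
    obtain Gi where Gi: "G ** Gi = mat 1" using spG invertible_right_inverse
      unfolding scalar_product_def by blast
    obtain Hi where Hi: "H ** Hi = mat 1" using spH invertible_right_inverse
      unfolding scalar_product_def by blast
    have "G' ** kron Gi Hi = mat 1" by (simp add: G'_def kron_mul Gi Hi kron_mat1)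
    then have "invertible G'" using invertible_right_inverse by blast
    moreover have "transpose G' = G'" by (simp add: G'_def kron_transpose GT HT)
    ultimately show ?thesis by (simp add: scalar_product_def)
  qed

  have adm': "admissible (r + 8) s G' J'"
    unfolding admissible_def
  proof (intro conjI)
    show "clifford_rep (r + 8) s J'" unfolding rep_rel using rel by blast
    show "scalar_product G'" by (rule spG')
    show "\<forall>z u v. sp G' (Jz (r + 8) s J' z *v u) v = - sp G' u (Jz (r + 8) s J' z *v v)"
    proof (intro allI)
      fix z u v
      have "transpose (Jz (r + 8) s J' z) ** G' = - (G' ** Jz (r + 8) s J' z)"
        by (rule skew_Jz) (use skew' in blast)
      then show "sp G' (Jz (r + 8) s J' z *v u) v = - sp G' u (Jz (r + 8) s J' z *v v)"
        using skew_iff by blast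
    qed
  qed

  from ie have e_orth: "\<forall>\<alpha> \<beta>. \<alpha> \<noteq> \<beta> \<longrightarrow> sp G (e \<alpha>) (e \<beta>) = 0"
    and e_norm: "\<forall>\<alpha>. sp G (e \<alpha>) (e \<alpha>) \<in> {1, -1}"
    and e_J: "\<forall>k<r+s. \<forall>\<alpha> \<beta>. sp G (J k *v e \<alpha>) (e \<beta>) \<in> {1, -1, 0}"
    unfolding integral_basis_def by auto
  from assms(4) have b_orth: "\<forall>\<alpha> \<beta>. \<alpha> \<noteq> \<beta> \<longrightarrow> sp H (b \<alpha>) (b \<beta>) = 0"
    and b_norm: "\<forall>\<alpha>. sp H (b \<alpha>) (b \<alpha>) \<in> {1, -1}"
    and b_K: "\<forall>k<8+0. \<forall>\<alpha> \<beta>. sp H (K k *v b \<alpha>) (b \<beta>) \<in> {1, -1, 0}"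
    unfolding integral_basis_def by auto
  have e01: "sp G (e \<alpha>) (e \<beta>) \<in> {1, -1, 0}" for \<alpha> \<beta>
    using e_orth e_norm by (cases "\<alpha> = \<beta>") auto
  have b01: "sp H (b \<alpha>) (b \<beta>) \<in> {1, -1, 0}" for \<alpha> \<beta>
    using b_orth b_norm by (cases "\<alpha> = \<beta>") auto
  have bO: "sp H (\<Omega> *v b \<alpha>) (b \<beta>) \<in> {1, -1, 0}" for \<alpha> \<beta>
  proof -
    obtain \<gamma> where g: "\<Omega> *v b \<alpha> = b \<gamma> \<or> \<Omega> *v b \<alpha> = - b \<gamma>" using OP by blast
    have "sp H (- b \<gamma>) (b \<beta>) = - sp H (b \<gamma>) (b \<beta>)" by (simp add: sp_def)
    then show ?thesis using g b01[of \<gamma> \<beta>] by auto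
  qed

  define f where "f = (\<lambda>x::'n \<times> 'm. tensor (e (fst x)) (b (snd x)))"
  have spf: "sp G' (f x) (f y) = sp G (e (fst x)) (e (fst y)) * sp H (b (snd x)) (b (snd y))" for x y
    by (simp add: f_def G'_def sp_kron)
  have f_orth: "\<forall>x y. x \<noteq> y \<longrightarrow> sp G' (f x) (f y) = 0"
  proof (intro allI impI)
    fix x y :: "'n \<times> 'm" assume "x \<noteq> y"
    then have "fst x \<noteq> fst y \<or> snd x \<noteq> snd y" by (auto simp: prod_eq_iff)
    then show "sp G' (f x) (f y) = 0" using e_orth b_orth by (auto simp: spf)
  qed
  have f_norm: "\<forall>x. sp G' (f x) (f x) \<in> {1, -1}"
  proof
    fix x
    show "sp G' (f x) (f x) \<in> {1, -1}"
      using e_norm[rule_format, of "fst x"] b_norm[rule_format, of "snd x"] by (auto simp: spf)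
  qed
  have f_J: "\<forall>k<r + 8 + s. \<forall>x y. sp G' (J' k *v f x) (f y) \<in> {1, -1, 0}"
  proof (intro allI impI)
    fix k x y assume k: "k < r + 8 + s"
    show "sp G' (J' k *v f x) (f y) \<in> {1, -1, 0}"
    proof (cases "r \<le> k \<and> k < r + 8")
      case True
      then have c: "k - r < 8 + 0" by auto
      have "sp G' (J' k *v f x) (f y) = sp G (e (fst x)) (e (fst y)) * sp H (K (k - r) *v b (snd x)) (b (snd y))"
        using True by (simp add: J'mid f_def G'_def kron_tensor sp_kron)
      then show ?thesis using mem3_mult[OF e01 b_K[rule_format, OF c]] by simp
    next
      case False
      have a: "sg k < r + s" using sg_lt False k by auto
      have "sp G' (J' k *v f x) (f y) = sp G (J (sg k) *v e (fst x)) (e (fst y)) * sp H (\<Omega> *v b (snd x)) (b (snd y))"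
        using False by (simp add: J'out f_def G'_def kron_tensor sp_kron)
      then show ?thesis using mem3_mult[OF e_J[rule_format, OF a] bO] by simp
    qed
  qed
  have f_nz: "\<forall>x. sp G' (f x) (f x) \<noteq> 0"
  proof
    fix x
    have "sp G' (f x) (f x) \<in> {1, -1}" using f_norm by blast
    then show "sp G' (f x) (f x) \<noteq> 0" by auto
  qed
  have fb: "is_basis f" by (rule orth_basis[OF f_orth f_nz])
  have "integral_basis (r + 8) s G' J' f"
    unfolding integral_basis_def using fb f_orth f_norm f_J by blast
  then have "admissible_integral (r + 8) s G' J'"
    unfolding admissible_integral_def using adm' by blast
  moreover have "\<forall>v v' u u'. sp G' (tensor v u) (tensor v' u') = sp G v v' * sp H u u'"
    by (simp add: G'_def sp_kron)
  ultimately show ?thesis by blast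
qed


end
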